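(* Let $\mathcal G$ be the DAG with vertices $A,B,C$ and edges $A\to B$, $A\to C$ only, and let $a,a'$ be distinct values of $A$. Then the distributions $p(\{B,C\}((aB),(a'C)))$, $p(\{B,C\}((aB)))$ and $p(\{B,C\}((aC)))$ are not identifiable from $p(A,B,C)$ under the single world model (SWM) for $\mathcal G$.
   Context: A causal structure for $\mathcal G$ consists of random variables $A$, $B(a)$, $C(a)$ for all $a$ in the state space of $A$, with a joint distribution; the observed variables are $A$, $B=B(A)$, $C=C(A)$. The SWM (FFRCISTG model) of $\mathcal G$ is the set of causal structures in which, for every value $a$, the variables $A$, $B(a)$, $C(a)$ are mutually independent. A counterfactual distribution is identifiable from $p(A,B,C)$ under the model if any two causal structures in the model inducing the same $p(A,B,C)$ induce the same value of it. Edge intervention responses: $\{B,C\}((aB),(a'C))$ denotes the pair $(B(a),C(a'))$ (edge $A\to B$ set to $a$, edge $A\to C$ set to $a'$); $\{B,C\}((aB))$ denotes $(B(a),C(A))=(B(a),C)$; $\{B,C\}((aC))$ denotes $(B,C(a))$. *)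

theory Defs
  imports "HOL-Probability.Probability_Mass_Function"
begin

text \<open>A causal structure for the DAG A -> B, A -> C: a joint distribution of the
  random variables A, B(x), C(x) (for all values x of A).\<close>

type_synonym ('a, 'b, 'c) causal_structure = "('a \<times> ('a \<Rightarrow> 'b) \<times> ('a \<Rightarrow> 'c)) pmf"

definition SWM :: "('a, 'b, 'c) causal_structure \<Rightarrow> bool" where
  "SWM P \<longleftrightarrow>
     (\<forall>x u v w.
        pmf (map_pmf (\<lambda>(s, f, g). (s, f x, g x)) P) (u, v, w) =
          pmf (map_pmf (\<lambda>(s, f, g). s) P) u *
          pmf (map_pmf (\<lambda>(s, f, g). f x) P) v *
          pmf (map_pmf (\<lambda>(s, f, g). g x) P) w)"

definition observed :: "('a, 'b, 'c) causal_structure \<Rightarrow> ('a \<times> 'b \<times> 'c) pmf" where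
  "observed P = map_pmf (\<lambda>(s, f, g). (s, f s, g s)) P"

definition identifiable_SWM :: "(('a, 'b, 'c) causal_structure \<Rightarrow> 'd) \<Rightarrow> bool" where
  "identifiable_SWM \<tau> \<longleftrightarrow>
     (\<forall>P Q. SWM P \<and> SWM Q \<and> observed P = observed Q \<longrightarrow> \<tau> P = \<tau> Q)"

definition BC_aB_a'C :: "'a \<Rightarrow> 'a \<Rightarrow> ('a, 'b, 'c) causal_structure \<Rightarrow> ('b \<times> 'c) pmf" where
  "BC_aB_a'C x x' P = map_pmf (\<lambda>(s, f, g). (f x, g x')) P"

definition BC_aB :: "'a \<Rightarrow> ('a, 'b, 'c) causal_structure \<Rightarrow> ('b \<times> 'c) pmf" where
  "BC_aB x P = map_pmf (\<lambda>(s, f, g). (f x, g s)) P"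

definition BC_aC :: "'a \<Rightarrow> ('a, 'b, 'c) causal_structure \<Rightarrow> ('b \<times> 'c) pmf" where
  "BC_aC x P = map_pmf (\<lambda>(s, f, g). (f s, g x)) P"

end

theory Submission
  imports Defs
begin

lemma SWM_const:
  fixes X :: "bool pmf"
  assumes "\<And>x. (\<exists>c. \<forall>u. F u x = c) \<or> (\<exists>c. \<forall>u. G u x = c)"
  shows "SWM (map_pmf (\<lambda>u. (k, F u, G u)) X)"
  unfolding SWM_def
proof (intro allI)
  fix x s v w
  have A: "pmf (map_pmf (\<lambda>u. k) X) s = (if s = k then 1 else 0)"
    by (simp add: pmf_map vimage_def)
  show "pmf (map_pmf (\<lambda>(s, f, g). (s, f x, g x)) (map_pmf (\<lambda>u. (k, F u, G u)) X)) (s, v, w) =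
          pmf (map_pmf (\<lambda>(s, f, g). s) (map_pmf (\<lambda>u. (k, F u, G u)) X)) s *
          pmf (map_pmf (\<lambda>(s, f, g). f x) (map_pmf (\<lambda>u. (k, F u, G u)) X)) v *
          pmf (map_pmf (\<lambda>(s, f, g). g x) (map_pmf (\<lambda>u. (k, F u, G u)) X)) w"
    using assms[of x]
  proof
    assume "\<exists>c. \<forall>u. F u x = c"
    then obtain c where c: "\<And>u. F u x = c" by blast
    show ?thesis
      by (cases "k = s \<and> c = v")
         (auto simp: pmf.map_comp o_def c pmf_map vimage_def measure_pmf_single)
  next
    assume "\<exists>c. \<forall>u. G u x = c"
    then obtain c where c: "\<And>u. G u x = c" by blast
    show ?thesis
      by (cases "k = s \<and> c = w")
         (auto simp: pmf.map_comp o_def c pmf_map vimage_def measure_pmf_single)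
  qed
qed

definition X :: "bool pmf" where "X = pmf_of_set UNIV"

lemma X_Not: "map_pmf Not X = X"
proof -
  have "range Not = UNIV" by (rule set_eqI) (simp add: image_iff, metis not_not)
  thus ?thesis unfolding X_def by (subst map_pmf_of_set_inj) (auto simp: inj_on_def)
qed

lemma X_meas: "measure_pmf.prob X {True} = 1/2" "measure_pmf.prob X {False} = 1/2"
  unfolding X_def by (simp_all add: measure_pmf_of_set)

theorem lemma12:
  fixes a a' :: 'a and b0 b1 :: 'b and c0 c1 :: 'c
  assumes "a \<noteq> a'" and "b0 \<noteq> b1" and "c0 \<noteq> c1"
  shows "\<not> identifiable_SWM (BC_aB_a'C a a' :: ('a, 'b, 'c) causal_structure \<Rightarrow> _)
       \<and> \<not> identifiable_SWM (BC_aB a :: ('a, 'b, 'c) causal_structure \<Rightarrow> _)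
       \<and> \<not> identifiable_SWM (BC_aC a :: ('a, 'b, 'c) causal_structure \<Rightarrow> _)"
proof -
  define F where "F = (\<lambda>u x. if x = a then (if u then b1 else b0) else b0)"
  define G where "G = (\<lambda>u x. if x = a' then (if u then c1 else c0) else c0)"
  define G' where "G' = (\<lambda>u. G (\<not> u))"
  define P :: "('a, 'b, 'c) causal_structure" where "P = map_pmf (\<lambda>u. (a', F u, G u)) X"
  define Q :: "('a, 'b, 'c) causal_structure" where "Q = map_pmf (\<lambda>u. (a', F u, G' u)) X"
  have sP: "SWM P" unfolding P_def
    by (rule SWM_const, case_tac "x = a") (use assms in \<open>auto simp: F_def G_def\<close>)
  have sQ: "SWM Q" unfolding Q_def
    by (rule SWM_const, case_tac "x = a") (use assms in \<open>auto simp: F_def G_def G'_def\<close>)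
  have oPQ: "observed P = observed Q"
  proof -
    have "observed Q = map_pmf (\<lambda>u. (a', b0, G (\<not> u) a')) X"
      unfolding observed_def Q_def using assms by (simp add: pmf.map_comp o_def F_def G'_def)
    also have "\<dots> = map_pmf (\<lambda>u. (a', b0, G u a')) (map_pmf Not X)"
      by (simp add: pmf.map_comp o_def)
    also have "\<dots> = observed P"
      unfolding X_Not observed_def P_def using assms by (simp add: pmf.map_comp o_def F_def)
    finally show ?thesis by simp
  qed
  have d1: "BC_aB_a'C a a' P \<noteq> BC_aB_a'C a a' Q"
  proof
    assume h: "BC_aB_a'C a a' P = BC_aB_a'C a a' Q"
    have "pmf (BC_aB_a'C a a' P) (b1, c1) = 1/2"
      unfolding BC_aB_a'C_def P_def using assms
      by (simp add: pmf.map_comp o_def F_def G_def pmf_map vimage_def X_meas[symmetric])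
         (rule arg_cong[where f="measure_pmf.prob X"], auto)
    moreover have "pmf (BC_aB_a'C a a' Q) (b1, c1) = 0"
      unfolding BC_aB_a'C_def Q_def using assms
      by (simp add: pmf.map_comp o_def F_def G_def G'_def pmf_map vimage_def)
    ultimately show False using h by simp
  qed
  have d2: "BC_aB a P \<noteq> BC_aB a Q"
  proof -
    have "BC_aB a P = BC_aB_a'C a a' P" "BC_aB a Q = BC_aB_a'C a a' Q"
      unfolding BC_aB_def BC_aB_a'C_def P_def Q_def by (simp_all add: pmf.map_comp o_def)
    thus ?thesis using d1 by simp
  qed
  define F2 where "F2 = (\<lambda>u x. if x = a' then (if u then b1 else b0) else b0)"
  define H where "H = (\<lambda>u x. if x = a then (if u then c1 else c0) else c0)"
  define H' where "H' = (\<lambda>u. H (\<not> u))"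
  define P2 :: "('a, 'b, 'c) causal_structure" where "P2 = map_pmf (\<lambda>u. (a', F2 u, H u)) X"
  define Q2 :: "('a, 'b, 'c) causal_structure" where "Q2 = map_pmf (\<lambda>u. (a', F2 u, H' u)) X"
  have sP2: "SWM P2" unfolding P2_def
    by (rule SWM_const, case_tac "x = a") (use assms in \<open>auto simp: F2_def H_def\<close>)
  have sQ2: "SWM Q2" unfolding Q2_def
    by (rule SWM_const, case_tac "x = a") (use assms in \<open>auto simp: F2_def H_def H'_def\<close>)
  have oPQ2: "observed P2 = observed Q2"
    unfolding observed_def P2_def Q2_def using assms by (simp add: pmf.map_comp o_def H_def H'_def)
  have d3: "BC_aC a P2 \<noteq> BC_aC a Q2"
  proof
    assume h: "BC_aC a P2 = BC_aC a Q2"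
    have "pmf (BC_aC a P2) (b1, c1) = 1/2"
      unfolding BC_aC_def P2_def using assms
      by (simp add: pmf.map_comp o_def F2_def H_def pmf_map vimage_def X_meas[symmetric])
         (rule arg_cong[where f="measure_pmf.prob X"], auto)
    moreover have "pmf (BC_aC a Q2) (b1, c1) = 0"
      unfolding BC_aC_def Q2_def using assms
      by (simp add: pmf.map_comp o_def F2_def H_def H'_def pmf_map vimage_def)
    ultimately show False using h by simp
  qed
  show ?thesis unfolding identifiable_SWM_def
    using sP sQ oPQ d1 d2 sP2 sQ2 oPQ2 d3 by blast
qed

end
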